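(* On $S_{1,2}=S_1\cap S_2$ the coefficients $(a_0,a_1,h_1,h_2)$ are free parameters, with $a_2=2h_2+h_{1,x}+a_0h_1$ and $h_3=-h_{1,xx}-2h_{2,x}+h_1^2-a_1h_1-a_0(h_{1,x}+h_2)$, and the restriction of the DKP flow $t_2$ to $S_{1,2}$ is $\partial_{t_2}a_0=\partial_x(2a_1-a_0^2+a_{0,x})$, $\partial_{t_2}a_1=2a_{2,x}+a_{1,xx}+2a_{0,x}(h_1-a_1)$, $\partial_{t_2}h_1=\partial_x(2h_2+h_{1,x})$, $\partial_{t_2}h_2=-\partial_x\big(2h_{1,xx}+3h_{2,x}-3h_1^2+2a_0(h_{1,x}+h_2)+2a_1h_1\big)$. Moreover, on $S_{1,2}$, $z\big(h^{(2)}+a_0h^{(1)}+(a_1-2h_1)\big)=h^{(3)}+a_0h^{(2)}+(a_1-3h_1)h^{(1)}+(a_2-2a_0h_1-3h_2-3h_{1,x})$.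
   Context: Let $x$ be a space variable; coefficients are functions of $x$, subscript $x$ denotes $\partial_x$. $M$ is the affine space of formal Laurent series $h(z)=z+\sum_{j\ge1}h_jz^{-j}$, $A$ that of $a(z)=z+\sum_{j\ge0}a_jz^{-j}$, $N=M\times A$. Faà di Bruno iterates: $h^{(0)}=1$, $h^{(j+1)}=\partial_xh^{(j)}+h\,h^{(j)}$. For $j\ge0$ the KP current $H^{(j)}$ is the unique series $h^{(j)}+\sum_{l=0}^{j-2}p^j_l[h]h^{(l)}$ ($p^j_l$ differential polynomials in the $h_i$) with $H^{(j)}=z^j+O(z^{-1})$; e.g. $H^{(1)}=h$, $H^{(2)}=h^{(2)}-2h_1$, $H^{(3)}=h^{(3)}-3h_1h^{(1)}-3(h_2+h_{1,x})$. The DKP equations on $N$ are $\partial_{t_j}h=\partial_xH^{(j)}$, $\partial_{t_j}a=a(\tilde H^{(j)}-H^{(j)})$, with $\tilde H^{(j)}$ the current evaluated at $\tilde h=h+a_x/a$. For $l\ge-1$, $S_l\subset N$ is defined by $z^la=H^{(l+1)}+\sum_{m=0}^{l}a_mH^{(l-m)}$; thus $S_1:\ za=H^{(2)}+a_0H^{(1)}+a_1$ and $S_2:\ z^2a=H^{(3)}+a_0H^{(2)}+a_1H^{(1)}+a_2$. *)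

theory Defs
  imports "HOL-Analysis.Analysis" "HOL-Library.Function_Algebras"
    "HOL-Computational_Algebra.Formal_Laurent_Series"
begin

text \<open>Coefficients are real functions of the space variable x.
  A formal Laurent series in z with finitely many positive powers of z is encoded
  as an element of the library type fls in the variable X = z^{-1}; thus z is fls_X_inv
  and the coefficient of z^k is the X-coefficient of index -k.\<close>

type_synonym coef = "real \<Rightarrow> real"
type_synonym ser = "coef fls"

definition smooth :: "coef \<Rightarrow> bool" where
  "smooth f \<longleftrightarrow> (\<forall>n x. ((deriv ^^ n) f) differentiable (at x))"

definition zz :: ser where "zz = fls_X_inv"

definition zc :: "ser \<Rightarrow> int \<Rightarrow> coef" where
  "zc s k = fls_nth s (- k)"

definition cst :: "coef \<Rightarrow> ser" where "cst c = fls_const c"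

definition Dx :: "ser \<Rightarrow> ser" where
  "Dx s = Abs_fls (\<lambda>n. deriv (fls_nth s n))"

definition smooth_ser :: "ser \<Rightarrow> bool" where
  "smooth_ser s \<longleftrightarrow> (\<forall>k. smooth (zc s k))"

definition inM :: "ser \<Rightarrow> bool" where
  "inM h \<longleftrightarrow> smooth_ser h \<and> zc h 1 = 1 \<and> (\<forall>k. k > 1 \<longrightarrow> zc h k = 0) \<and> zc h 0 = 0"

definition inA :: "ser \<Rightarrow> bool" where
  "inA a \<longleftrightarrow> smooth_ser a \<and> zc a 1 = 1 \<and> (\<forall>k. k > 1 \<longrightarrow> zc a k = 0)"

definition inN :: "ser \<Rightarrow> ser \<Rightarrow> bool" where
  "inN h a \<longleftrightarrow> inM h \<and> inA a"

fun fdb :: "ser \<Rightarrow> nat \<Rightarrow> ser" where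
  "fdb h 0 = 1"
| "fdb h (Suc j) = Dx (fdb h j) + h * fdb h j"

definition KP :: "ser \<Rightarrow> nat \<Rightarrow> ser" where
  "KP h j = (THE H. (\<exists>p :: nat \<Rightarrow> coef.
      H = fdb h j + (\<Sum>l\<in>{0..<j-1}. cst (p l) * fdb h l))
      \<and> zc H (int j) = 1 \<and> (\<forall>k. k > int j \<longrightarrow> zc H k = 0)
      \<and> (\<forall>k. 0 \<le> k \<and> k < int j \<longrightarrow> zc H k = 0))"

definition logder :: "ser \<Rightarrow> ser" where
  "logder a = (THE r. a * r = Dx a)"

definition htilde :: "ser \<Rightarrow> ser \<Rightarrow> ser" where
  "htilde h a = h + logder a"

text \<open>DKP flows (components of the vector field of the t_j flow on N).\<close>
definition dkp_h :: "nat \<Rightarrow> ser \<Rightarrow> ser \<Rightarrow> ser" where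
  "dkp_h j h a = Dx (KP h j)"

definition dkp_a :: "nat \<Rightarrow> ser \<Rightarrow> ser \<Rightarrow> ser" where
  "dkp_a j h a = a * (KP (htilde h a) j - KP h j)"

definition inS :: "nat \<Rightarrow> ser \<Rightarrow> ser \<Rightarrow> bool" where
  "inS l h a \<longleftrightarrow> inN h a \<and>
     zz ^ l * a = KP h (l + 1) + (\<Sum>m\<in>{0..l}. cst (zc a (- int m)) * KP h (l - m))"

definition inS12 :: "ser \<Rightarrow> ser \<Rightarrow> bool" where
  "inS12 h a \<longleftrightarrow> inS 1 h a \<and> inS 2 h a"

end

theory Submission
  imports Defs
begin

unbundle fps_syntax


lemma deriv_const_fun[simp]: "deriv (\<lambda>x::real. c::real) = (\<lambda>x. 0)"
  by (rule ext) (simp add: DERIV_imp_deriv)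

lemma deriv_zero_fun[simp]: "deriv (0::real\<Rightarrow>real) = 0"
  by (simp add: zero_fun_def)

lemma deriv_one_fun[simp]: "deriv (1::real\<Rightarrow>real) = 0"
  by (simp add: one_fun_def zero_fun_def)

lemma deriv_numeral_fun[simp]: "deriv (numeral n::real\<Rightarrow>real) = 0"
  by (simp add: numeral_fun zero_fun_def)

definition dtb :: "coef \<Rightarrow> bool" where
  "dtb f \<longleftrightarrow> (\<forall>x. f differentiable (at x))"

lemma dtbD: "dtb f \<Longrightarrow> DERIV f x :> deriv f x"
  unfolding dtb_def by (simp add: DERIV_deriv_iff_real_differentiable)

lemma deriv_add_fun: "dtb f \<Longrightarrow> dtb g \<Longrightarrow> deriv (f + g) = deriv f + deriv g"
  by (rule ext) (auto simp: plus_fun_def intro!: DERIV_imp_deriv DERIV_add dtbD)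

lemma deriv_mult_fun: "dtb f \<Longrightarrow> dtb g \<Longrightarrow> deriv (f * g) = deriv f * g + f * deriv g"
proof (rule ext)
  fix x assume "dtb f" "dtb g"
  from DERIV_mult[OF dtbD[OF this(1)] dtbD[OF this(2)], of x]
  show "deriv (f * g) x = (deriv f * g + f * deriv g) x"
    by (auto simp: times_fun_def mult.commute intro!: DERIV_imp_deriv)
qed

lemma deriv_uminus_fun: "dtb f \<Longrightarrow> deriv (- f) = - deriv f"
  by (rule ext) (auto simp: fun_Compl_def intro!: DERIV_imp_deriv DERIV_minus dtbD)

lemma deriv_diff_fun: "dtb f \<Longrightarrow> dtb g \<Longrightarrow> deriv (f - g) = deriv f - deriv g"
  by (rule ext) (auto simp: fun_diff_def intro!: DERIV_imp_deriv DERIV_diff dtbD)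

lemma dtb_add: "dtb f \<Longrightarrow> dtb g \<Longrightarrow> dtb (f + g)"
  unfolding dtb_def plus_fun_def by auto
lemma dtb_mult: "dtb f \<Longrightarrow> dtb g \<Longrightarrow> dtb (f * g)"
  unfolding dtb_def times_fun_def by auto

lemma smooth_iff: "smooth f \<longleftrightarrow> (\<forall>n. dtb ((deriv ^^ n) f))"
  unfolding smooth_def dtb_def by auto

lemma smooth_dtb: "smooth f \<Longrightarrow> dtb f"
  unfolding smooth_iff by (metis funpow_0)

lemma smooth_deriv: "smooth f \<Longrightarrow> smooth (deriv f)"
  unfolding smooth_iff by (metis comp_apply funpow_Suc_right)

lemma funpow_deriv_const: "(deriv ^^ n) (\<lambda>x::real. c::real) = (\<lambda>x. if n = 0 then c else 0)"
  by (induction n) auto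

lemma smooth_const: "smooth (\<lambda>x. c)"
  unfolding smooth_def funpow_deriv_const by auto

lemma smooth_0[simp]: "smooth 0" and smooth_1[simp]: "smooth 1"
  and smooth_numeral[simp]: "smooth (numeral n)"
  using smooth_const by (auto simp: zero_fun_def one_fun_def numeral_fun)

lemma funpow_deriv_add:
  "(\<forall>j<k. dtb ((deriv ^^ j) u) \<and> dtb ((deriv ^^ j) v)) \<Longrightarrow>
    (deriv ^^ k) (u + v) = (deriv ^^ k) u + (deriv ^^ k) v"
proof (induction k arbitrary: u v)
  case 0 then show ?case by simp
next
  case (Suc k)
  have "deriv (u + v) = deriv u + deriv v"
    using Suc.prems by (intro deriv_add_fun) (metis funpow_0 zero_less_Suc)+
  moreover have "(deriv ^^ k) (deriv u + deriv v) = (deriv ^^ k) (deriv u) + (deriv ^^ k) (deriv v)"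
    using Suc.prems by (intro Suc.IH) (metis Suc_mono comp_apply funpow_Suc_right)
  ultimately show ?case by (simp only: funpow_Suc_right o_apply)
qed

lemma smooth_add[simp, intro]: "smooth f \<Longrightarrow> smooth g \<Longrightarrow> smooth (f + g)"
  unfolding smooth_iff by (simp add: funpow_deriv_add dtb_add)

lemma smooth_mult_aux:
  "\<forall>f g. smooth f \<longrightarrow> smooth g \<longrightarrow> (\<forall>k\<le>n. dtb ((deriv ^^ k) (f * g)))"
proof (induction n)
  case 0 then show ?case by (metis dtb_mult smooth_dtb funpow_0 le_zero_eq)
next
  case (Suc n)
  show ?case
  proof (intro allI impI)
    fix f g k assume f: "smooth f" and g: "smooth g" and k: "k \<le> Suc n"
    show "dtb ((deriv ^^ k) (f * g))"
    proof (cases k)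
      case 0 then show ?thesis using f g by (metis dtb_mult smooth_dtb funpow_0)
    next
      case (Suc k')
      have d: "deriv (f * g) = deriv f * g + f * deriv g"
        using f g by (intro deriv_mult_fun smooth_dtb)
      have A: "\<forall>j\<le>n. dtb ((deriv ^^ j) (deriv f * g))"
        using Suc.IH f g smooth_deriv by blast
      have B: "\<forall>j\<le>n. dtb ((deriv ^^ j) (f * deriv g))"
        using Suc.IH f g smooth_deriv by blast
      have "(deriv ^^ k') (deriv f * g + f * deriv g) = (deriv ^^ k') (deriv f * g) + (deriv ^^ k') (f * deriv g)"
        using A B Suc k by (intro funpow_deriv_add) auto
      moreover have "dtb ((deriv ^^ k') (deriv f * g) + (deriv ^^ k') (f * deriv g))"
        using A B Suc k by (intro dtb_add) auto
      ultimately show ?thesis using Suc d by (simp only: funpow_Suc_right o_apply)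
    qed
  qed
qed

lemma smooth_mult[simp, intro]: "smooth f \<Longrightarrow> smooth g \<Longrightarrow> smooth (f * g)"
  unfolding smooth_iff using smooth_mult_aux by (metis smooth_iff order_refl)

lemma smooth_uminus[simp, intro]: "smooth f \<Longrightarrow> smooth (- f)"
proof -
  assume "smooth f"
  then have "smooth ((- 1) * f)" using smooth_const[of "-1"]
    by (intro smooth_mult) (auto simp: fun_Compl_def one_fun_def)
  then show ?thesis by simp
qed

lemma smooth_diff[simp, intro]: "smooth f \<Longrightarrow> smooth g \<Longrightarrow> smooth (f - g)"
  using smooth_add[of f "- g"] by simp

lemma smooth_power[simp, intro]: "smooth f \<Longrightarrow> smooth (f ^ n)"
  by (induction n) auto

lemma smooth_sum[intro]: "(\<And>i. i \<in> A \<Longrightarrow> smooth (g i)) \<Longrightarrow> smooth (\<Sum>i\<in>A. g i)"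
  by (induction A rule: infinite_finite_induct) auto





lemma Dx_nth[simp]: "Dx s $$ n = deriv (s $$ n)"
proof -
  have "\<forall>\<^sub>\<infinity>n. deriv (s $$ (- int n)) = 0"
    by (rule eventually_mono[OF MOST_fls_neg_nth_eq_0[of s]]) simp
  then show ?thesis unfolding Dx_def by simp
qed

lemma zz_mult_nth[simp]: "(zz * f) $$ n = f $$ (n + 1)"
  by (simp add: zz_def fls_X_inv_times_conv_shift)

lemma X_mult_nth[simp]: "(fls_X * f) $$ n = (f::ser) $$ (n - 1)"
  by (simp add: fls_X_times_conv_shift)

lemma X_zz[simp]: "fls_X * (zz * f) = f"
  by (rule fls_eqI) simp

lemma cst_mult_nth[simp]: "(cst c * f) $$ n = c * f $$ n"
  by (simp add: cst_def)

lemma cst_nth[simp]: "cst c $$ n = (if n = 0 then c else 0)"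
  by (simp add: cst_def)

lemma cst_uminus: "cst (- x) = - cst x" by (simp add: cst_def)
lemma cst_add: "cst (x + y) = cst x + cst y" by (simp add: cst_def fls_plus_const)
lemma cst_diff: "cst (x - y) = cst x - cst y" by (simp add: cst_def fls_minus_const)
lemma cst_mult: "cst (x * y) = cst x * cst y" by (simp add: cst_def)
lemma cst_0[simp]: "cst 0 = 0" by (simp add: cst_def)
lemma cst_1[simp]: "cst 1 = 1" by (simp add: cst_def)

definition lb :: "ser \<Rightarrow> int \<Rightarrow> bool" where
  "lb f d \<longleftrightarrow> (\<forall>n<d. f $$ n = 0)"

lemma lbD: "lb f d \<Longrightarrow> n < d \<Longrightarrow> f $$ n = 0"
  unfolding lb_def by auto

lemma lb_mono: "lb f d \<Longrightarrow> d' \<le> d \<Longrightarrow> lb f d'"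
  unfolding lb_def by auto

lemma prod_formula:
  assumes f: "lb f d1" and g: "lb g d2"
  shows "(f * g) $$ n = (\<Sum>i=d1..n-d2. f $$ i * g $$ (n - i))"
proof (cases "f = 0 \<or> g = 0")
  case True then show ?thesis by auto
next
  case False
  then have fz: "f \<noteq> 0" and gz: "g \<noteq> 0" by auto
  have "d1 \<le> fls_subdegree f" using f fz unfolding lb_def by (intro fls_subdegree_geI) auto
  moreover have "d2 \<le> fls_subdegree g" using g gz unfolding lb_def by (intro fls_subdegree_geI) auto
  ultimately have sub: "{fls_subdegree f..n - fls_subdegree g} \<subseteq> {d1..n-d2}" by auto
  have "(f * g) $$ n = (\<Sum>i=fls_subdegree f..n - fls_subdegree g. f $$ i * g $$ (n - i))"
    by (rule fls_times_nth(2))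
  also have "\<dots> = (\<Sum>i=d1..n-d2. f $$ i * g $$ (n - i))"
  proof (rule sum.mono_neutral_left[OF _ sub])
    show "\<forall>i\<in>{d1..n - d2} - {fls_subdegree f..n - fls_subdegree g}. f $$ i * g $$ (n - i) = 0"
    proof
      fix i assume "i \<in> {d1..n - d2} - {fls_subdegree f..n - fls_subdegree g}"
      then have "i < fls_subdegree f \<or> n - i < fls_subdegree g" by auto
      then show "f $$ i * g $$ (n - i) = 0" by auto
    qed
  qed simp
  finally show ?thesis .
qed

lemma lb_mult: "lb f d1 \<Longrightarrow> lb g d2 \<Longrightarrow> lb (f * g) (d1 + d2)"
  unfolding lb_def[of "f * g"] by (auto simp: prod_formula)

lemma lead_mult: "lb f d1 \<Longrightarrow> lb g d2 \<Longrightarrow> (f * g) $$ (d1 + d2) = f $$ d1 * g $$ d2"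
  by (simp add: prod_formula)

lemma lb_add: "lb f d \<Longrightarrow> lb g d \<Longrightarrow> lb (f + g) d"
  unfolding lb_def by auto
lemma lb_diff: "lb f d \<Longrightarrow> lb g d \<Longrightarrow> lb (f - g) d"
  unfolding lb_def by auto
lemma lb_Dx: "lb f d \<Longrightarrow> lb (Dx f) d"
  unfolding lb_def by auto
lemma lb_cst_mult: "lb f d \<Longrightarrow> lb (cst c * f) d"
  unfolding lb_def by auto
lemma lb_cst: "d \<le> 0 \<Longrightarrow> lb (cst c) d"
  unfolding lb_def by auto
lemma lb_one: "d \<le> 0 \<Longrightarrow> lb 1 d"
  unfolding lb_def by auto

lemma icc_ins: "a \<le> b \<Longrightarrow> {a..b::int} = insert a {a+1..b}"
  by auto
lemma icc_empty: "b < a \<Longrightarrow> {a..b::int} = {}"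
  by auto

lemma smooth_serD: "smooth_ser s \<Longrightarrow> smooth (s $$ n)"
  unfolding smooth_ser_def zc_def by (metis minus_minus)
lemma smooth_serI: "(\<And>n. smooth (s $$ n)) \<Longrightarrow> smooth_ser s"
  unfolding smooth_ser_def zc_def by auto

lemma ss_add[intro]: "smooth_ser f \<Longrightarrow> smooth_ser g \<Longrightarrow> smooth_ser (f + g)"
  by (intro smooth_serI) (simp add: smooth_serD)
lemma ss_diff[intro]: "smooth_ser f \<Longrightarrow> smooth_ser g \<Longrightarrow> smooth_ser (f - g)"
  by (intro smooth_serI) (simp add: smooth_serD)
lemma ss_uminus[intro]: "smooth_ser f \<Longrightarrow> smooth_ser (- f)"
  by (intro smooth_serI) (simp add: smooth_serD)
lemma ss_mult[intro]: "smooth_ser f \<Longrightarrow> smooth_ser g \<Longrightarrow> smooth_ser (f * g)"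
  by (auto intro!: smooth_serI smooth_sum smooth_mult dest: smooth_serD simp: fls_times_nth(2))
lemma ss_Dx[intro]: "smooth_ser f \<Longrightarrow> smooth_ser (Dx f)"
  by (auto intro!: smooth_serI smooth_deriv dest: smooth_serD)
lemma ss_cst[intro]: "smooth c \<Longrightarrow> smooth_ser (cst c)"
  by (auto intro!: smooth_serI)
lemma ss_one[intro]: "smooth_ser 1"
  by (auto intro!: smooth_serI)
lemma ss_zero[intro]: "smooth_ser 0"
  by (auto intro!: smooth_serI)
lemma ss_zz[intro]: "smooth_ser zz"
  by (auto intro!: smooth_serI simp: zz_def)
lemma ss_X[intro]: "smooth_ser fls_X"
  by (auto intro!: smooth_serI)
lemma ss_power[intro]: "smooth_ser f \<Longrightarrow> smooth_ser (f ^ n)"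
  by (induction n) auto

lemma Dx_add: "smooth_ser f \<Longrightarrow> smooth_ser g \<Longrightarrow> Dx (f + g) = Dx f + Dx g"
  by (rule fls_eqI) (auto simp: deriv_add_fun smooth_dtb smooth_serD)

lemma Dx_one[simp]: "Dx 1 = 0"
  by (rule fls_eqI) simp





definition Msh :: "ser \<Rightarrow> bool" where
  "Msh h \<longleftrightarrow> lb h (-1) \<and> h $$ (-1) = 1 \<and> h $$ 0 = 0"

lemma inM_iff: "inM h \<longleftrightarrow> smooth_ser h \<and> Msh h"
  unfolding inM_def Msh_def lb_def zc_def
  by (auto, metis minus_minus neg_less_iff_less)

lemma inA_iff: "inA a \<longleftrightarrow> smooth_ser a \<and> lb a (-1) \<and> a $$ (-1) = 1"
  unfolding inA_def lb_def zc_def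
  by (auto, metis minus_minus neg_less_iff_less)

lemma fdb_1[simp]: "fdb h 1 = h"
  by (simp add: fls_mult_one)

lemma fdb_2: "fdb h 2 = Dx h + h * h"
  by (simp add: numeral_2_eq_2)

lemma fdb_3: "fdb h 3 = Dx (fdb h 2) + h * fdb h 2"
  by (simp add: numeral_3_eq_3 numeral_2_eq_2)

lemma fdb_shape:
  assumes "Msh h"
  shows "lb (fdb h j) (- int j) \<and> fdb h j $$ (- int j) = 1 \<and> fdb h j $$ (1 - int j) = 0"
proof (induction j)
  case 0 then show ?case by (simp add: lb_def)
next
  case (Suc j)
  let ?F = "fdb h j"
  have h: "lb h (-1)" "h $$ (-1) = 1" "h $$ 0 = 0" using assms unfolding Msh_def by auto
  have lbF: "lb ?F (- int j)" and F1: "?F $$ (- int j) = 1" and F0: "?F $$ (1 - int j) = 0"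
    using Suc by auto
  have lbP: "lb (h * ?F) (-1 + - int j)" by (rule lb_mult[OF h(1) lbF])
  have "lb (Dx ?F) (-1 + - int j)" by (rule lb_Dx[OF lb_mono[OF lbF]]) simp
  then have "lb (fdb h (Suc j)) (-1 + - int j)" using lbP by (simp add: lb_add)
  moreover have "fdb h (Suc j) $$ (-1 + - int j) = 1"
    using lead_mult[OF h(1) lbF] h(2) F1 lbD[OF lbF, of "-1 + - int j"] by simp
  moreover have "fdb h (Suc j) $$ (- int j) = 0"
  proof -
    have "(h * ?F) $$ (- int j) = (\<Sum>i=-1..0. h $$ i * ?F $$ (- int j - i))"
      using prod_formula[OF h(1) lbF] by simp
    also have "\<dots> = 0" using h F0 by (simp add: icc_ins)
    finally show ?thesis using F1 by simp
  qed
  ultimately show ?case by (simp add: algebra_simps)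
qed

lemma fdb_lb: "Msh h \<Longrightarrow> lb (fdb h j) (- int j)"
  using fdb_shape by blast
lemma fdb_top: "Msh h \<Longrightarrow> fdb h j $$ (- int j) = 1"
  using fdb_shape by blast
lemma fdb_top1: "Msh h \<Longrightarrow> fdb h j $$ (1 - int j) = 0"
  using fdb_shape by blast

lemma Msh_D: assumes "Msh h" shows "lb h (-1)" "h $$ (-1) = 1" "h $$ 0 = 0"
  using assms unfolding Msh_def by auto

lemma P2_lb: "Msh h \<Longrightarrow> lb (fdb h 2) (-2)"
  using fdb_lb[of h 2] by simp
lemma P3_lb: "Msh h \<Longrightarrow> lb (fdb h 3) (-3)"
  using fdb_lb[of h 3] by simp
lemma P2_m2: "Msh h \<Longrightarrow> fdb h 2 $$ (-2) = 1"
  using fdb_top[of h 2] by simp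
lemma P2_m1: "Msh h \<Longrightarrow> fdb h 2 $$ (-1) = 0"
  using fdb_top1[of h 2] by simp
lemma P3_m3: "Msh h \<Longrightarrow> fdb h 3 $$ (-3) = 1"
  using fdb_top[of h 3] by simp
lemma P3_m2: "Msh h \<Longrightarrow> fdb h 3 $$ (-2) = 0"
  using fdb_top1[of h 3] by simp

lemma hh_nth: "Msh h \<Longrightarrow> (h * h) $$ n = (\<Sum>i=-1..n+1. h $$ i * h $$ (n - i))"
  using prod_formula[OF Msh_D(1) Msh_D(1), of h h n] by simp

lemma P2_nth: "Msh h \<Longrightarrow> fdb h 2 $$ n = deriv (h $$ n) + (\<Sum>i=-1..n+1. h $$ i * h $$ (n - i))"
  by (simp add: fdb_2 hh_nth)

lemma P3_nth: "Msh h \<Longrightarrow> fdb h 3 $$ n = deriv (fdb h 2 $$ n) + (\<Sum>i=-1..n+2. h $$ i * fdb h 2 $$ (n - i))"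
  using prod_formula[OF Msh_D(1) P2_lb, of h h n] by (simp add: fdb_3)

lemma P2_0: "Msh h \<Longrightarrow> fdb h 2 $$ 0 = 2 * h $$ 1"
  apply (simp only: P2_nth) apply (simp add: icc_ins) by (simp add: Msh_D)
lemma P2_1: "Msh h \<Longrightarrow> fdb h 2 $$ 1 = deriv (h $$ 1) + 2 * h $$ 2"
  apply (simp only: P2_nth) apply (simp add: icc_ins) by (simp add: Msh_D)
lemma P2_2: "Msh h \<Longrightarrow> fdb h 2 $$ 2 = deriv (h $$ 2) + 2 * h $$ 3 + h $$ 1 * h $$ 1"
  apply (simp only: P2_nth) apply (simp add: icc_ins) by (simp add: Msh_D)
lemma P3_m1: "Msh h \<Longrightarrow> fdb h 3 $$ (-1) = 3 * h $$ 1"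
  apply (simp only: P3_nth) apply (simp add: icc_ins) by (simp add: Msh_D P2_m1 P2_m2 P2_0)
lemma P3_0: "Msh h \<Longrightarrow> fdb h 3 $$ 0 = deriv (fdb h 2 $$ 0) + fdb h 2 $$ 1 + h $$ 2"
  apply (simp only: P3_nth) apply (simp add: icc_ins) by (simp add: Msh_D P2_m1 P2_m2)
lemma P3_1: "Msh h \<Longrightarrow> fdb h 3 $$ 1 = deriv (fdb h 2 $$ 1) + fdb h 2 $$ 2 + h $$ 1 * fdb h 2 $$ 0 + h $$ 3"
  apply (simp only: P3_nth) apply (simp add: icc_ins) by (simp add: Msh_D P2_m1 P2_m2)





definition KP2 :: "ser \<Rightarrow> ser" where
  "KP2 h = fdb h 2 - cst (fdb h 2 $$ 0)"
definition KP3 :: "ser \<Rightarrow> ser" where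
  "KP3 h = fdb h 3 - cst (fdb h 3 $$ (-1)) * h - cst (fdb h 3 $$ 0)"

lemma KP_0: "KP h 0 = 1"
  unfolding KP_def zc_def
  by (rule the_equality) auto

lemma KP_1: "Msh h \<Longrightarrow> KP h 1 = h"
  unfolding KP_def zc_def
proof (rule the_equality)
  assume h: "Msh h"
  show "(\<exists>p. h = fdb h 1 + (\<Sum>l = 0..<1 - 1. cst (p l) * fdb h l)) \<and>
    h $$ - int 1 = 1 \<and> (\<forall>k>int 1. h $$ - k = 0) \<and> (\<forall>k. 0 \<le> k \<and> k < int 1 \<longrightarrow> h $$ - k = 0)"
  proof (intro conjI allI impI)
    fix k assume "0 \<le> k \<and> k < int 1" then have "k = 0" by simp
    then show "h $$ - k = 0" using Msh_D(3)[OF h] by simp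
  qed (use Msh_D[OF h] in \<open>auto intro: lbD\<close>)
next
  fix H assume "(\<exists>p. H = fdb h 1 + (\<Sum>l = 0..<1 - 1. cst (p l) * fdb h l)) \<and>
    H $$ - int 1 = 1 \<and> (\<forall>k>int 1. H $$ - k = 0) \<and> (\<forall>k. 0 \<le> k \<and> k < int 1 \<longrightarrow> H $$ - k = 0)"
  then show "H = h" by auto
qed

lemma KP2_lb: "Msh h \<Longrightarrow> lb (KP2 h) (-2)"
  unfolding KP2_def by (intro lb_diff P2_lb lb_cst) auto
lemma KP2_nth: "KP2 h $$ n = (if n = 0 then 0 else fdb h 2 $$ n)"
  unfolding KP2_def by simp
lemma KP3_lb: "Msh h \<Longrightarrow> lb (KP3 h) (-3)"
  unfolding KP3_def by (intro lb_diff P3_lb lb_cst lb_cst_mult lb_mono[OF Msh_D(1)]) auto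
lemma KP3_nth: "Msh h \<Longrightarrow> KP3 h $$ n = fdb h 3 $$ n - fdb h 3 $$ (-1) * h $$ n - (if n = 0 then fdb h 3 $$ 0 else 0)"
  unfolding KP3_def by simp
lemma KP3_m1: "Msh h \<Longrightarrow> KP3 h $$ (-1) = 0"
  by (simp add: KP3_nth Msh_D)
lemma KP3_0: "Msh h \<Longrightarrow> KP3 h $$ 0 = 0"
  by (simp add: KP3_nth Msh_D)

lemma KP_2: "Msh h \<Longrightarrow> KP h 2 = KP2 h"
  unfolding KP_def zc_def
proof (rule the_equality)
  assume h: "Msh h"
  show "(\<exists>p. KP2 h = fdb h 2 + (\<Sum>l = 0..<2 - 1. cst (p l) * fdb h l)) \<and>
    KP2 h $$ - int 2 = 1 \<and> (\<forall>k>int 2. KP2 h $$ - k = 0) \<and> (\<forall>k. 0 \<le> k \<and> k < int 2 \<longrightarrow> KP2 h $$ - k = 0)"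
  proof (intro conjI allI impI)
    show "\<exists>p. KP2 h = fdb h 2 + (\<Sum>l = 0..<2 - 1. cst (p l) * fdb h l)"
      by (rule exI[of _ "\<lambda>_. - (fdb h 2 $$ 0)"]) (simp add: KP2_def cst_def fls_mult_one)
    show "KP2 h $$ - int 2 = 1" using h by (simp add: KP2_nth P2_m2)
    fix k
    show "int 2 < k \<Longrightarrow> KP2 h $$ - k = 0" using lbD[OF KP2_lb[OF h], of "-k"] by simp
    show "0 \<le> k \<and> k < int 2 \<Longrightarrow> KP2 h $$ - k = 0"
    proof -
      assume "0 \<le> k \<and> k < int 2"
      then have "k = 0 \<or> k = 1" by auto
      then show ?thesis using h by (auto simp: KP2_nth P2_m1)
    qed
  qed
next
  fix H assume h: "Msh h" and H: "(\<exists>p. H = fdb h 2 + (\<Sum>l = 0..<2 - 1. cst (p l) * fdb h l)) \<and>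
    H $$ - int 2 = 1 \<and> (\<forall>k>int 2. H $$ - k = 0) \<and> (\<forall>k. 0 \<le> k \<and> k < int 2 \<longrightarrow> H $$ - k = 0)"
  then obtain p where p: "H = fdb h 2 + cst (p 0)" by (auto simp: fls_mult_one)
  from H have "H $$ 0 = 0" by auto
  then have "p 0 = - (fdb h 2 $$ 0)" using p by (simp add: eq_neg_iff_add_eq_0 add.commute)
  then show "H = KP2 h" using p by (simp add: KP2_def cst_uminus)
qed

lemma KP_3: "Msh h \<Longrightarrow> KP h 3 = KP3 h"
  unfolding KP_def zc_def
proof (rule the_equality)
  assume h: "Msh h"
  show "(\<exists>p. KP3 h = fdb h 3 + (\<Sum>l = 0..<3 - 1. cst (p l) * fdb h l)) \<and>
    KP3 h $$ - int 3 = 1 \<and> (\<forall>k>int 3. KP3 h $$ - k = 0) \<and> (\<forall>k. 0 \<le> k \<and> k < int 3 \<longrightarrow> KP3 h $$ - k = 0)"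
  proof (intro conjI allI impI)
    show "\<exists>p. KP3 h = fdb h 3 + (\<Sum>l = 0..<3 - 1. cst (p l) * fdb h l)"
    proof (rule exI[of _ "\<lambda>l. if l = 0 then - (fdb h 3 $$ 0) else - (fdb h 3 $$ (-1))"])
      have e: "{0..<3 - 1} = {0::nat, 1}" by auto
      show "KP3 h = fdb h 3 + (\<Sum>l = 0..<3 - 1. cst (if l = 0 then - (fdb h 3 $$ 0) else - (fdb h 3 $$ (-1))) * fdb h l)"
        unfolding e by (simp add: KP3_def cst_def fls_mult_one algebra_simps)
    qed
    show "KP3 h $$ - int 3 = 1" using h by (simp add: KP3_nth P3_m3 lbD[OF Msh_D(1)])
    fix k
    show "int 3 < k \<Longrightarrow> KP3 h $$ - k = 0" using lbD[OF KP3_lb[OF h], of "-k"] by simp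
    assume "0 \<le> k \<and> k < int 3"
    then have "k = 0 \<or> k = 1 \<or> k = 2" by auto
    then show "KP3 h $$ - k = 0"
      using h by (auto simp: KP3_m1 KP3_0 KP3_nth P3_m2 Msh_D lbD[OF Msh_D(1)[OF h]])
  qed
next
  fix H assume h: "Msh h" and H: "(\<exists>p. H = fdb h 3 + (\<Sum>l = 0..<3 - 1. cst (p l) * fdb h l)) \<and>
    H $$ - int 3 = 1 \<and> (\<forall>k>int 3. H $$ - k = 0) \<and> (\<forall>k. 0 \<le> k \<and> k < int 3 \<longrightarrow> H $$ - k = 0)"
  have e: "{0..<3 - 1} = {0::nat, 1}" by auto
  from H obtain p where "H = fdb h 3 + (\<Sum>l\<in>{0::nat, 1}. cst (p l) * fdb h l)" unfolding e
    by blast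
  then have p: "H = fdb h 3 + (cst (p 0) + cst (p 1) * h)" by (simp add: fls_mult_one)
  from H have H1: "H $$ (-1) = 0" and H0: "H $$ 0 = 0" by auto
  from H1 p h have p1: "p 1 = - (fdb h 3 $$ (-1))" by (simp add: Msh_D eq_neg_iff_add_eq_0 add.commute)
  from H0 p h have p0: "p 0 = - (fdb h 3 $$ 0)" by (simp add: Msh_D eq_neg_iff_add_eq_0 add.commute)
  show "H = KP3 h" using p p0 p1 by (simp add: KP3_def cst_def algebra_simps)
qed





definition FF :: "coef \<Rightarrow> coef \<Rightarrow> ser \<Rightarrow> ser" where
  "FF a0 a1 h = KP2 h + cst a0 * h + cst a1"
definition A2 :: "coef \<Rightarrow> ser \<Rightarrow> coef" where
  "A2 a0 h = fdb h 2 $$ 1 + a0 * h $$ 1"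
definition GG :: "coef \<Rightarrow> coef \<Rightarrow> ser \<Rightarrow> ser" where
  "GG a0 a1 h = KP3 h + cst a0 * KP2 h + cst a1 * h + cst (A2 a0 h)"
definition Phi :: "coef \<Rightarrow> coef \<Rightarrow> ser \<Rightarrow> ser" where
  "Phi a0 a1 h = zz * FF a0 a1 h - GG a0 a1 h"

lemma Phi_nth: "Phi a0 a1 h $$ n = FF a0 a1 h $$ (n + 1) - GG a0 a1 h $$ n"
  unfolding Phi_def by simp

lemma FF_nth: "FF a0 a1 h $$ n = KP2 h $$ n + a0 * h $$ n + (if n = 0 then a1 else 0)"
  unfolding FF_def by simp
lemma GG_nth: "GG a0 a1 h $$ n = KP3 h $$ n + a0 * KP2 h $$ n + a1 * h $$ n + (if n = 0 then A2 a0 h else 0)"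
  unfolding GG_def by simp

lemma Phi_low:
  assumes h: "Msh h" and n: "n \<le> 0"
  shows "Phi a0 a1 h $$ n = 0"
proof -
  have "n < -3 \<or> n = -3 \<or> n = -2 \<or> n = -1 \<or> n = 0" using n by auto
  then show ?thesis
  proof (elim disjE)
    assume "n < -3"
    then show ?thesis using lbD[OF KP2_lb[OF h]] lbD[OF KP3_lb[OF h]] lbD[OF Msh_D(1)[OF h]]
      by (simp add: Phi_nth FF_nth GG_nth)
  next
    assume "n = -3"
    then show ?thesis using h
      by (simp add: Phi_nth FF_nth GG_nth KP2_nth KP3_nth P2_m2 P3_m3 lbD[OF Msh_D(1)[OF h]] lbD[OF P2_lb[OF h]])
  next
    assume "n = -2"
    then show ?thesis using h
      by (simp add: Phi_nth FF_nth GG_nth KP2_nth KP3_nth P2_m1 P2_m2 P3_m2 Msh_D lbD[OF Msh_D(1)[OF h]])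
  next
    assume "n = -1"
    then show ?thesis using h
      by (simp add: Phi_nth FF_nth GG_nth KP2_nth KP3_m1 P2_m1 Msh_D)
  next
    assume "n = 0"
    then show ?thesis using h
      by (simp add: Phi_nth FF_nth GG_nth KP2_nth KP3_0 A2_def Msh_D)
  qed
qed

lemma ss_fdb[intro]: "smooth_ser h \<Longrightarrow> smooth_ser (fdb h j)"
  by (induction j) auto

lemma ss_Phi[intro]: "smooth_ser h \<Longrightarrow> smooth a0 \<Longrightarrow> smooth a1 \<Longrightarrow> smooth_ser (Phi a0 a1 h)"
  unfolding Phi_def FF_def GG_def KP2_def KP3_def A2_def
  by (intro ss_add ss_diff ss_mult ss_cst ss_fdb ss_zz smooth_add smooth_mult smooth_serD) auto

lemma ring_aux: "(P' :: ser) = P + Q \<Longrightarrow> h' = h + d \<Longrightarrow> DP' = DP + DQ \<Longrightarrow>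
  (DP' + h' * P') - (DP + h * P) = DQ + d * P' + h * Q"
  by (simp add: algebra_simps)

lemma Phi_QL:
  assumes h: "Msh h" "smooth_ser h" and h': "Msh h'" "smooth_ser h'" and m: "m \<ge> 3"
    and agree: "\<And>i. i < m \<Longrightarrow> h' $$ i = h $$ i"
  shows "Phi a0 a1 h' $$ (m - 2) = Phi a0 a1 h $$ (m - 2) - (h' $$ m - h $$ m)"
proof -
  define \<delta> where "\<delta> = h' - h"
  define e where "e = h' $$ m - h $$ m"
  have sd: "smooth_ser \<delta>" unfolding \<delta>_def using h h' by auto
  have ld: "lb \<delta> m" unfolding lb_def \<delta>_def using agree by auto
  have de: "\<delta> $$ m = e" unfolding \<delta>_def e_def by simp
  have h'eq: "h' = h + \<delta>" unfolding \<delta>_def by simp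
  define Q where "Q = fdb h' 2 - fdb h 2"
  have Qeq: "Q = Dx \<delta> + \<delta> * (h + h')"
  proof -
    have "Dx h' = Dx h + Dx \<delta>" unfolding h'eq using h(2) sd by (rule Dx_add)
    moreover have "h' * h' - h * h = \<delta> * (h + h')" unfolding \<delta>_def by (simp add: algebra_simps)
    ultimately show ?thesis unfolding Q_def fdb_2 by (simp add: algebra_simps)
  qed
  have lhh: "lb (h + h') (-1)" using h h' by (intro lb_add Msh_D)
  have lQ: "lb Q (m - 1)" unfolding Qeq
    by (intro lb_add lb_Dx lb_mono[OF ld]) (use lb_mult[OF ld lhh] in auto)
  have Qm1: "Q $$ (m - 1) = 2 * e"
    using lead_mult[OF ld lhh] lbD[OF ld, of "m - 1"] de h h' unfolding Qeq
    by (simp add: Msh_D)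
  have sQ: "smooth_ser Q" unfolding Q_def using h h' by auto
  define R where "R = fdb h' 3 - fdb h 3"
  have Req: "R = Dx Q + \<delta> * fdb h' 2 + h * Q"
  proof -
    have P2': "fdb h' 2 = fdb h 2 + Q" unfolding Q_def by simp
    have "Dx (fdb h' 2) = Dx (fdb h 2) + Dx Q" unfolding P2' using h(2) sQ by (intro Dx_add) auto
    then show ?thesis unfolding R_def fdb_3[of h'] fdb_3[of h]
      using ring_aux[OF P2' h'eq] by blast
  qed
  have lR: "lb R (m - 2)" unfolding Req
    using lb_mult[OF ld P2_lb[OF h'(1)]] lb_mult[OF Msh_D(1)[OF h(1)] lQ]
    by (intro lb_add lb_Dx lb_mono[OF lQ]) (auto simp: algebra_simps)
  have Rm2: "R $$ (m - 2) = 3 * e"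
  proof -
    have "(\<delta> * fdb h' 2) $$ (m - 2) = e"
      using lead_mult[OF ld P2_lb[OF h'(1)]] de P2_m2[OF h'(1)] by simp
    moreover have "(h * Q) $$ (m - 2) = 2 * e"
      using lead_mult[OF Msh_D(1)[OF h(1)] lQ] Qm1 Msh_D(2)[OF h(1)] by simp
    moreover have "(Dx Q) $$ (m - 2) = 0" using lbD[OF lQ, of "m - 2"] by simp
    ultimately show ?thesis unfolding Req by simp
  qed
  have Rm1: "R $$ (-1) = 0" using lbD[OF lR, of "-1"] m by simp
  have Qm2: "Q $$ (m - 2) = 0" using lbD[OF lQ, of "m - 2"] by simp
  have P2n: "\<And>n. fdb h' 2 $$ n = fdb h 2 $$ n + Q $$ n" unfolding Q_def by simp
  have P3n: "\<And>n. fdb h' 3 $$ n = fdb h 3 $$ n + R $$ n" unfolding R_def by simp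
  have a1: "h' $$ (m - 1) = h $$ (m - 1)" and a2: "h' $$ (m - 2) = h $$ (m - 2)" using agree by auto
  have hm: "h' $$ m = h $$ m + e" unfolding e_def by simp
  have ne: "m - 2 \<noteq> 0" "m - 1 \<noteq> 0" "m - 2 + 1 = m - 1" using m by auto
  show ?thesis
    unfolding Phi_nth FF_nth GG_nth KP2_nth KP3_nth[OF h(1)] KP3_nth[OF h'(1)]
    using ne P2n P3n a1 a2 Qm2 Rm1
    by (simp add: algebra_simps Qm1 Rm2 hm)
qed





lemma zz_pow2: "zz ^ 2 * a = zz * (zz * a)"
  by (simp add: power2_eq_square mult.assoc)

lemma KP_1s: "Msh h \<Longrightarrow> KP h (Suc 0) = h" using KP_1 by simp
lemma KP_2s: "Msh h \<Longrightarrow> KP h (Suc (Suc 0)) = KP2 h" using KP_2 by (simp add: numeral_2_eq_2)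

lemma S1_iff: "Msh h \<Longrightarrow> inS 1 h a \<longleftrightarrow> inN h a \<and> zz * a = FF (a $$ 0) (a $$ 1) h"
  unfolding inS_def FF_def
  by (simp add: KP_2s KP_1s KP_0 zc_def add.assoc)

lemma S2_iff: "Msh h \<Longrightarrow> inS 2 h a \<longleftrightarrow> inN h a \<and> zz ^ 2 * a = KP3 h + cst (a $$ 0) * KP2 h + cst (a $$ 1) * h + cst (a $$ 2)"
proof -
  have e: "{0..2::nat} = {0, 1, 2}" by auto
  assume h: "Msh h"
  then show ?thesis
    unfolding inS_def e by (simp add: KP_3 KP_2 KP_1s KP_0 zc_def add.assoc)
qed

lemma inN_Msh: "inN h a \<Longrightarrow> Msh h"
  unfolding inN_def inM_iff by auto

lemma a2_eq:
  assumes h: "Msh h" and S1: "zz * a = FF (a $$ 0) (a $$ 1) h"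
  shows "a $$ 2 = A2 (a $$ 0) h"
proof -
  have "a $$ 2 = (zz * a) $$ 1" by simp
  also have "\<dots> = A2 (a $$ 0) h" unfolding S1 FF_nth KP2_nth A2_def by simp
  finally show ?thesis .
qed

lemma S12_iff:
  assumes N: "inN h a"
  shows "inS12 h a \<longleftrightarrow> zz * a = FF (a $$ 0) (a $$ 1) h \<and> Phi (a $$ 0) (a $$ 1) h = 0"
proof -
  have h: "Msh h" using N by (rule inN_Msh)
  show ?thesis
  proof
    assume "inS12 h a"
    then have S1: "zz * a = FF (a $$ 0) (a $$ 1) h"
      and S2: "zz ^ 2 * a = KP3 h + cst (a $$ 0) * KP2 h + cst (a $$ 1) * h + cst (a $$ 2)"
      unfolding inS12_def S1_iff[OF h] S2_iff[OF h] by auto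
    have "Phi (a $$ 0) (a $$ 1) h = zz * (zz * a) - zz ^ 2 * a"
      unfolding Phi_def GG_def S2 a2_eq[OF h S1] S1 by simp
    then show "zz * a = FF (a $$ 0) (a $$ 1) h \<and> Phi (a $$ 0) (a $$ 1) h = 0"
      using S1 by (simp add: zz_pow2)
  next
    assume A: "zz * a = FF (a $$ 0) (a $$ 1) h \<and> Phi (a $$ 0) (a $$ 1) h = 0"
    then have S1: "zz * a = FF (a $$ 0) (a $$ 1) h" by auto
    have "zz ^ 2 * a = GG (a $$ 0) (a $$ 1) h"
      using A unfolding zz_pow2 Phi_def by (simp add: S1)
    then show "inS12 h a"
      unfolding inS12_def S1_iff[OF h] S2_iff[OF h] GG_def a2_eq[OF h S1] using N S1 by simp
  qed
qed





definition mk :: "(int \<Rightarrow> coef) \<Rightarrow> ser" where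
  "mk f = Abs_fls (\<lambda>n. if n < -1 then 0 else f n)"

lemma mk_nth[simp]: "mk f $$ n = (if n < -1 then 0 else f n)"
  unfolding mk_def by (rule nth_Abs_fls_lower_bound) auto

primrec approx :: "coef \<Rightarrow> coef \<Rightarrow> coef \<Rightarrow> coef \<Rightarrow> nat \<Rightarrow> ser" where
  "approx a0 a1 h1 h2 0 = mk (\<lambda>n. if n = -1 then 1 else if n = 1 then h1 else if n = 2 then h2 else 0)"
| "approx a0 a1 h1 h2 (Suc k) = approx a0 a1 h1 h2 k +
     mk (\<lambda>n. if n = int k + 3 then Phi a0 a1 (approx a0 a1 h1 h2 k) $$ (int k + 1) else 0)"

lemma approx_step: "i \<le> int k + 2 \<Longrightarrow> approx a0 a1 h1 h2 (Suc k) $$ i = approx a0 a1 h1 h2 k $$ i"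
  by simp

lemma approx_step3: "approx a0 a1 h1 h2 (Suc k) $$ (int k + 3) =
    approx a0 a1 h1 h2 k $$ (int k + 3) + Phi a0 a1 (approx a0 a1 h1 h2 k) $$ (int k + 1)"
  by simp

lemma approx_mono: "k \<le> l \<Longrightarrow> i \<le> int k + 2 \<Longrightarrow> approx a0 a1 h1 h2 l $$ i = approx a0 a1 h1 h2 k $$ i"
proof (induction l)
  case 0 then show ?case by simp
next
  case (Suc l)
  show ?case
  proof (cases "k = Suc l")
    case False
    then have "k \<le> l" using Suc by auto
    then show ?thesis using Suc by (subst approx_step) auto
  qed simp
qed

lemma approx_inv:
  assumes s: "smooth a0" "smooth a1" "smooth h1" "smooth h2"
  shows "Msh (approx a0 a1 h1 h2 k) \<and> smooth_ser (approx a0 a1 h1 h2 k)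
    \<and> approx a0 a1 h1 h2 k $$ 1 = h1 \<and> approx a0 a1 h1 h2 k $$ 2 = h2
    \<and> (\<forall>j \<le> int k. Phi a0 a1 (approx a0 a1 h1 h2 k) $$ j = 0)"
proof (induction k)
  case 0
  have M0: "Msh (approx a0 a1 h1 h2 0)" unfolding Msh_def lb_def by auto
  moreover have "smooth_ser (approx a0 a1 h1 h2 0)"
    by (rule smooth_serI) (use s in auto)
  moreover have "\<forall>j \<le> int 0. Phi a0 a1 (approx a0 a1 h1 h2 0) $$ j = 0"
    using Phi_low[OF M0] by simp
  moreover have "approx a0 a1 h1 h2 0 $$ 1 = h1 \<and> approx a0 a1 h1 h2 0 $$ 2 = h2" by simp
  ultimately show ?case by blast
next
  case (Suc k)
  let ?A = "approx a0 a1 h1 h2 k" and ?B = "approx a0 a1 h1 h2 (Suc k)"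
  have IH: "Msh ?A" "smooth_ser ?A" "?A $$ 1 = h1" "?A $$ 2 = h2" "\<And>j. j \<le> int k \<Longrightarrow> Phi a0 a1 ?A $$ j = 0"
    using Suc by auto
  have ag: "\<And>i. i \<le> int k + 2 \<Longrightarrow> ?B $$ i = ?A $$ i" by (rule approx_step)
  have MB: "Msh ?B" using IH(1) ag unfolding Msh_def lb_def by auto
  have sc: "smooth (Phi a0 a1 ?A $$ (int k + 1))"
    using ss_Phi[OF IH(2) s(1,2)] by (rule smooth_serD)
  have SB: "smooth_ser ?B"
  proof -
    have "smooth_ser (mk (\<lambda>n. if n = int k + 3 then Phi a0 a1 ?A $$ (int k + 1) else 0))"
      by (rule smooth_serI) (use sc in auto)
    then show ?thesis using IH(2) by auto
  qed
  have B12: "?B $$ 1 = h1" "?B $$ 2 = h2" using ag IH by auto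
  have Phi0: "Phi a0 a1 ?B $$ j = 0" if j: "j \<le> int (Suc k)" for j
  proof (cases "j \<le> 0")
    case True then show ?thesis using MB by (rule Phi_low[rotated])
  next
    case False
    have QL: "Phi a0 a1 ?B $$ (j + 2 - 2) = Phi a0 a1 ?A $$ (j + 2 - 2) - (?B $$ (j + 2) - ?A $$ (j + 2))"
      by (rule Phi_QL[OF IH(1,2) MB SB]) (use False j ag in auto)
    show ?thesis
    proof (cases "j = int k + 1")
      case True
      then show ?thesis using QL approx_step3[of a0 a1 h1 h2 k]
        by (simp add: add.assoc add.commute)
    next
      case False
      then have "j \<le> int k" using j by auto
      then show ?thesis using QL IH(5) ag[of "j + 2"] by simp
    qed
  qed
  show ?case using MB SB B12 Phi0 by auto
qed

definition hsol :: "coef \<Rightarrow> coef \<Rightarrow> coef \<Rightarrow> coef \<Rightarrow> ser" where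
  "hsol a0 a1 h1 h2 = Abs_fls (\<lambda>i. approx a0 a1 h1 h2 (nat i) $$ i)"

lemma hsol_nth: "hsol a0 a1 h1 h2 $$ i = approx a0 a1 h1 h2 (nat i) $$ i"
  unfolding hsol_def
proof (rule nth_Abs_fls_lower_bound[of "-1"], intro allI impI)
  fix n :: int assume "n < -1"
  then show "approx a0 a1 h1 h2 (nat n) $$ n = 0" by simp
qed

lemma hsol_agree: "i \<le> int k + 2 \<Longrightarrow> hsol a0 a1 h1 h2 $$ i = approx a0 a1 h1 h2 k $$ i"
  unfolding hsol_nth
  by (cases "nat i \<le> k") (auto simp: approx_mono)

lemma hsol_props:
  assumes s: "smooth a0" "smooth a1" "smooth h1" "smooth h2"
  shows "Msh (hsol a0 a1 h1 h2) \<and> smooth_ser (hsol a0 a1 h1 h2)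
    \<and> hsol a0 a1 h1 h2 $$ 1 = h1 \<and> hsol a0 a1 h1 h2 $$ 2 = h2
    \<and> Phi a0 a1 (hsol a0 a1 h1 h2) = 0"
proof -
  let ?h = "hsol a0 a1 h1 h2"
  have M: "Msh ?h" using approx_inv[OF s, of 0] hsol_agree[of _ 0 a0 a1 h1 h2]
    unfolding Msh_def lb_def by auto
  have S: "smooth_ser ?h" unfolding hsol_nth
    by (rule smooth_serI) (use approx_inv[OF s] in \<open>auto simp: hsol_nth intro: smooth_serD\<close>)
  have 12: "?h $$ 1 = h1" "?h $$ 2 = h2" using approx_inv[OF s, of 0] hsol_agree[of _ 0 a0 a1 h1 h2] by auto
  have "Phi a0 a1 ?h $$ j = 0" for j
  proof (cases "j \<le> 0")
    case True then show ?thesis using M by (rule Phi_low[rotated])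
  next
    case False
    let ?A = "approx a0 a1 h1 h2 (nat j)"
    have A: "Msh ?A" "smooth_ser ?A" "Phi a0 a1 ?A $$ j = 0" using approx_inv[OF s, of "nat j"] False by auto
    have "Phi a0 a1 ?h $$ (j + 2 - 2) = Phi a0 a1 ?A $$ (j + 2 - 2) - (?h $$ (j + 2) - ?A $$ (j + 2))"
      by (rule Phi_QL[OF A(1,2) M S]) (use False hsol_agree[of _ "nat j"] in auto)
    then show ?thesis using A(3) hsol_agree[of "j + 2" "nat j"] False by simp
  qed
  then have "Phi a0 a1 ?h = 0" by (intro fls_eqI) simp
  then show ?thesis using M S 12 by auto
qed





lemma zz_X: "zz * (fls_X * f) = (f :: ser)"
  by (rule fls_eqI) simp

lemma ss_KP2[intro]: "smooth_ser h \<Longrightarrow> smooth_ser (KP2 h)"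
  unfolding KP2_def by (intro ss_diff ss_cst ss_fdb smooth_serD ss_fdb)

lemma ss_FF[intro]: "smooth_ser h \<Longrightarrow> smooth a0 \<Longrightarrow> smooth a1 \<Longrightarrow> smooth_ser (FF a0 a1 h)"
  unfolding FF_def by (intro ss_add ss_mult ss_cst ss_KP2)

lemma uniq_h:
  assumes h: "Msh h" "smooth_ser h" and h': "Msh h'" "smooth_ser h'"
    and P: "Phi a0 a1 h = 0" and P': "Phi a0 a1 h' = 0"
    and e1: "h $$ 1 = h' $$ 1" and e2: "h $$ 2 = h' $$ 2"
  shows "h = h'"
proof -
  have "\<forall>i \<le> int n. h' $$ i = h $$ i" for n
  proof (induction n)
    case 0
    show ?case
    proof (intro allI impI)
      fix i :: int assume "i \<le> int 0"
      then have "i < -1 \<or> i = -1 \<or> i = 0" by auto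
      then show "h' $$ i = h $$ i" using h h' by (auto simp: Msh_D lbD[OF Msh_D(1)])
    qed
  next
    case (Suc n)
    show ?case
    proof (intro allI impI)
      fix i :: int assume i: "i \<le> int (Suc n)"
      show "h' $$ i = h $$ i"
      proof (cases "i \<le> int n")
        case True then show ?thesis using Suc by auto
      next
        case False
        then have ii: "i = int n + 1" using i by auto
        show ?thesis
        proof (cases "i \<le> 2")
          case True
          then have "i = 1 \<or> i = 2" using ii by auto
          then show ?thesis using e1 e2 by auto
        next
          case False
          have "Phi a0 a1 h' $$ (i - 2) = Phi a0 a1 h $$ (i - 2) - (h' $$ i - h $$ i)"
            by (rule Phi_QL[OF h h']) (use False ii Suc in auto)
          then show ?thesis using P P' by simp
        qed
      qed
    qed
  qed
  then show ?thesis by (intro fls_eqI) (metis le_nat_iff order.refl nat_le_iff linorder_le_cases int_ops(1) order_trans of_nat_0_le_iff)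
qed

lemma part1:
  assumes s: "smooth a0" "smooth a1" "smooth h1" "smooth h2"
  shows "\<exists>!(h, a). inS12 h a \<and> zc a 0 = a0 \<and> zc a (-1) = a1 \<and> zc h (-1) = h1 \<and> zc h (-2) = h2"
proof -
  let ?h = "hsol a0 a1 h1 h2"
  let ?a = "fls_X * FF a0 a1 ?h"
  have H: "Msh ?h" "smooth_ser ?h" "?h $$ 1 = h1" "?h $$ 2 = h2" "Phi a0 a1 ?h = 0"
    using hsol_props[OF s] by auto
  have a0: "?a $$ 0 = a0" and a1: "?a $$ 1 = a1"
    using H(1) by (simp_all add: FF_nth KP2_nth P2_m1 Msh_D)
  have inA: "inA ?a" unfolding inA_iff
  proof (intro conjI)
    show "smooth_ser ?a" using H(2) s by (intro ss_mult ss_X ss_FF)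
    show "lb ?a (-1)" unfolding lb_def
      using lbD[OF KP2_lb[OF H(1)]] lbD[OF Msh_D(1)[OF H(1)]] by (auto simp: FF_nth)
    show "?a $$ (-1) = 1" using H(1) by (simp add: FF_nth KP2_nth P2_m2 lbD[OF Msh_D(1)[OF H(1)]])
  qed
  have N: "inN ?h ?a" unfolding inN_def inM_iff using H inA by auto
  have S: "inS12 ?h ?a" unfolding S12_iff[OF N] a0 a1 zz_X using H by simp
  show ?thesis
  proof (rule ex1I[of _ "(?h, ?a)"])
    show "case (?h, ?a) of (h, a) \<Rightarrow> inS12 h a \<and> zc a 0 = a0 \<and> zc a (-1) = a1 \<and> zc h (-1) = h1 \<and> zc h (-2) = h2"
      using S a0 a1 H by (simp add: zc_def)
  next
    fix p assume "case p of (h, a) \<Rightarrow> inS12 h a \<and> zc a 0 = a0 \<and> zc a (-1) = a1 \<and> zc h (-1) = h1 \<and> zc h (-2) = h2"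
    then obtain h a where p: "p = (h, a)" and S': "inS12 h a" and c: "a $$ 0 = a0" "a $$ 1 = a1" "h $$ 1 = h1" "h $$ 2 = h2"
      by (cases p) (auto simp: zc_def)
    have N': "inN h a" using S' unfolding inS12_def inS_def by auto
    have hM: "Msh h" "smooth_ser h" using N' unfolding inN_def inM_iff by auto
    have S1': "zz * a = FF a0 a1 h" and P': "Phi a0 a1 h = 0" using S' unfolding S12_iff[OF N'] c by auto
    have "h = ?h" by (rule uniq_h[OF hM H(1,2) P' H(5)]) (use c H in auto)
    moreover have "a = ?a"
    proof -
      have "a = fls_X * (zz * a)" by simp
      then show ?thesis unfolding S1' \<open>h = ?h\<close> .
    qed
    ultimately show "p = (?h, ?a)" using p by simp
  qed
qed





lemma smooth_deriv_simp[simp]: "smooth f \<Longrightarrow> smooth (deriv f)" by (rule smooth_deriv)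

lemma deriv_add_s[simp]: "smooth f \<Longrightarrow> smooth g \<Longrightarrow> deriv (f + g) = deriv f + deriv g"
  by (intro deriv_add_fun smooth_dtb)
lemma deriv_diff_s[simp]: "smooth f \<Longrightarrow> smooth g \<Longrightarrow> deriv (f - g) = deriv f - deriv g"
  by (intro deriv_diff_fun smooth_dtb)
lemma deriv_mult_s[simp]: "smooth f \<Longrightarrow> smooth g \<Longrightarrow> deriv (f * g) = deriv f * g + f * deriv g"
  by (intro deriv_mult_fun smooth_dtb)
lemma deriv_uminus_s[simp]: "smooth f \<Longrightarrow> deriv (- f) = - deriv f"
  by (intro deriv_uminus_fun smooth_dtb)
lemma deriv_power2_s[simp]: "smooth f \<Longrightarrow> deriv (f ^ 2) = 2 * f * deriv f"
  by (simp add: power2_eq_square algebra_simps)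

definition winv :: "ser \<Rightarrow> ser" where "winv a = fls_right_inverse a 1"

lemma A_subdeg: "lb a (-1) \<Longrightarrow> a $$ (-1) = 1 \<Longrightarrow> fls_subdegree a = -1"
  by (rule fls_subdegree_eqI) (auto simp: lbD)

lemma winv: assumes "lb a (-1)" "a $$ (-1) = 1"
  shows "a * winv a = 1" "lb (winv a) 1"
proof -
  have sd: "fls_subdegree a = -1" using assms by (rule A_subdeg)
  show "a * winv a = 1" unfolding winv_def by (rule fls_right_inverse) (simp add: sd assms)
  have "fls_subdegree (winv a) = 1" unfolding winv_def using fls_lr_inverse_subdegree(2)[of 1 a] sd by simp
  then show "lb (winv a) 1" unfolding lb_def by auto
qed

lemma logder_eq: assumes "lb a (-1)" "a $$ (-1) = 1"
  shows "logder a = winv a * Dx a"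
  unfolding logder_def
proof (rule the_equality)
  show "a * (winv a * Dx a) = Dx a" using winv(1)[OF assms] by (simp add: mult.assoc[symmetric])
  fix r assume "a * r = Dx a"
  then have "winv a * (a * r) = winv a * Dx a" by simp
  then show "r = winv a * Dx a" using winv(1)[OF assms] by (simp add: mult.assoc[symmetric] mult.commute)
qed

lemma logder_props: assumes "lb a (-1)" "a $$ (-1) = 1"
  shows "lb (logder a) 1" "a * logder a = Dx a"
proof -
  have "lb (Dx a) 0" unfolding lb_def
  proof (intro allI impI)
    fix n :: int assume "n < 0"
    then have "n < -1 \<or> n = -1" by auto
    then show "Dx a $$ n = 0" using lbD[OF assms(1), of n] assms(2) by auto
  qed
  then show "lb (logder a) 1" unfolding logder_eq[OF assms] using lb_mult[OF winv(2)[OF assms]] by fastforce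
  show "a * logder a = Dx a" unfolding logder_eq[OF assms] using winv(1)[OF assms]
    by (simp add: mult.assoc[symmetric])
qed





lemma part2_facts:
  assumes S: "inS12 h a"
  shows "a $$ 2 = 2 * h $$ 2 + deriv (h $$ 1) + a $$ 0 * h $$ 1"
    and "h $$ 3 = - deriv (deriv (h $$ 1)) - 2 * deriv (h $$ 2) + (h $$ 1) ^ 2 - a $$ 1 * h $$ 1
                  - a $$ 0 * (deriv (h $$ 1) + h $$ 2)"
    and "KP h 2 $$ 1 = 2 * h $$ 2 + deriv (h $$ 1)"
    and "KP h 2 $$ 2 = - (2 * deriv (deriv (h $$ 1)) + 3 * deriv (h $$ 2) - 3 * (h $$ 1) ^ 2
                                    + 2 * a $$ 0 * (deriv (h $$ 1) + h $$ 2) + 2 * a $$ 1 * h $$ 1)"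
proof -
  have N: "inN h a" using S unfolding inS12_def inS_def by auto
  have hM: "Msh h" "smooth_ser h" using N unfolding inN_def inM_iff by auto
  have aA: "smooth_ser a" "lb a (-1)" "a $$ (-1) = 1" using N unfolding inN_def inA_iff by auto
  have S1: "zz * a = FF (a $$ 0) (a $$ 1) h" and P: "Phi (a $$ 0) (a $$ 1) h = 0"
    using S unfolding S12_iff[OF N] by auto
  have sm: "\<And>k. smooth (h $$ k)" "\<And>k. smooth (a $$ k)" using hM(2) aA(1) by (auto intro: smooth_serD)
  show f1: "a $$ 2 = 2 * h $$ 2 + deriv (h $$ 1) + a $$ 0 * h $$ 1"
    using a2_eq[OF hM(1) S1] by (simp add: A2_def P2_1[OF hM(1)] add.commute)
  have "Phi (a $$ 0) (a $$ 1) h $$ 1 =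
     (- deriv (deriv (h $$ 1)) - 2 * deriv (h $$ 2) + (h $$ 1) ^ 2 - a $$ 1 * h $$ 1
                  - a $$ 0 * (deriv (h $$ 1) + h $$ 2)) - h $$ 3"
    using hM(1) sm
    apply (simp add: Phi_nth FF_nth GG_nth KP2_nth KP3_nth P2_0 P2_1 P2_2 P3_1 P3_m1 Msh_D)
    apply (simp add: algebra_simps power2_eq_square)
    done
  then show f2: "h $$ 3 = - deriv (deriv (h $$ 1)) - 2 * deriv (h $$ 2) + (h $$ 1) ^ 2 - a $$ 1 * h $$ 1
                  - a $$ 0 * (deriv (h $$ 1) + h $$ 2)" using P by simp
  show "KP h 2 $$ 1 = 2 * h $$ 2 + deriv (h $$ 1)"
    using hM(1) by (simp add: KP_2 KP2_nth P2_1 add.commute)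
  show "KP h 2 $$ 2 = - (2 * deriv (deriv (h $$ 1)) + 3 * deriv (h $$ 2) - 3 * (h $$ 1) ^ 2
                                    + 2 * a $$ 0 * (deriv (h $$ 1) + h $$ 2) + 2 * a $$ 1 * h $$ 1)"
  proof -
    have "KP h 2 $$ 2 = deriv (h $$ 2) + 2 * h $$ 3 + h $$ 1 * h $$ 1"
      using hM(1) by (simp add: KP_2 KP2_nth P2_2)
    also have "\<dots> = - (2 * deriv (deriv (h $$ 1)) + 3 * deriv (h $$ 2) - 3 * (h $$ 1) ^ 2
                                    + 2 * a $$ 0 * (deriv (h $$ 1) + h $$ 2) + 2 * a $$ 1 * h $$ 1)"
      unfolding f2 by (simp add: algebra_simps power2_eq_square)
    finally show ?thesis .
  qed
qed





lemma part2_flowa: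
  assumes S: "inS12 h a"
  shows "dkp_a 2 h a $$ 0 = deriv (2 * a $$ 1 - (a $$ 0) ^ 2 + deriv (a $$ 0))"
    and "dkp_a 2 h a $$ 1 = 2 * deriv (a $$ 2) + deriv (deriv (a $$ 1)) + 2 * deriv (a $$ 0) * (h $$ 1 - a $$ 1)"
proof -
  have N: "inN h a" using S unfolding inS12_def inS_def by auto
  have hM: "Msh h" "smooth_ser h" using N unfolding inN_def inM_iff by auto
  have aA: "smooth_ser a" "lb a (-1)" "a $$ (-1) = 1" using N unfolding inN_def inA_iff by auto
  have sm: "\<And>k. smooth (h $$ k)" "\<And>k. smooth (a $$ k)" using hM(2) aA(1) by (auto intro: smooth_serD)
  define r where "r = logder a"
  have lr: "lb r 1" and ar: "a * r = Dx a" unfolding r_def using logder_props[OF aA(2,3)] by auto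
  have arn: "\<And>n. (a * r) $$ n = (\<Sum>i=-1..n-1. a $$ i * r $$ (n - i))"
    using prod_formula[OF aA(2) lr] by simp
  have r1: "r $$ 1 = deriv (a $$ 0)"
    using arn[of 0] aA(3) unfolding ar by (simp add: icc_ins)
  have r2: "r $$ 2 = deriv (a $$ 1) - a $$ 0 * deriv (a $$ 0)"
    using arn[of 1] aA(3) r1 unfolding ar by (simp add: icc_ins algebra_simps)
  have r3: "r $$ 3 = deriv (a $$ 2) - a $$ 0 * r $$ 2 - a $$ 1 * r $$ 1"
    using arn[of 2] aA(3) unfolding ar by (simp add: icc_ins algebra_simps)
  have sr: "smooth (r $$ 1)" "smooth (r $$ 2)" using sm by (simp_all add: r1 r2)
  define ht where "ht = h + r"
  have htM: "Msh ht" unfolding ht_def Msh_def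
    using Msh_D[OF hM(1)] lbD[OF lr, of "-1"] lbD[OF lr, of 0] by (auto intro!: lb_add lb_mono[OF lr])
  define D where "D = KP2 ht - KP2 h"
  have dk: "dkp_a 2 h a = a * D"
    unfolding dkp_a_def D_def ht_def r_def htilde_def[symmetric] using KP_2 hM(1) htM
    unfolding ht_def r_def htilde_def by simp
  have lD: "lb D 1" unfolding lb_def
  proof (intro allI impI)
    fix n :: int assume "n < 1"
    then have "n < -2 \<or> n = -2 \<or> n = -1 \<or> n = 0" by auto
    then show "D $$ n = 0" unfolding D_def using hM(1) htM
      by (auto simp: KP2_nth P2_m1 P2_m2 lbD[OF P2_lb[OF hM(1)]] lbD[OF P2_lb[OF htM]])
  qed
  have D1: "D $$ 1 = deriv (deriv (a $$ 0)) + 2 * (deriv (a $$ 1) - a $$ 0 * deriv (a $$ 0))"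
    unfolding D_def using hM(1) htM sm by (simp add: KP2_nth P2_1 ht_def r1 r2)
  have D2: "D $$ 2 = deriv (r $$ 2) + 2 * r $$ 3 + 2 * h $$ 1 * r $$ 1 + r $$ 1 * r $$ 1"
    unfolding D_def using hM(1) htM sm sr by (simp add: KP2_nth P2_2 ht_def algebra_simps)
  have aD: "\<And>n. (a * D) $$ n = (\<Sum>i=-1..n-1. a $$ i * D $$ (n - i))"
    using prod_formula[OF aA(2) lD] by simp
  show "dkp_a 2 h a $$ 0 = deriv (2 * a $$ 1 - (a $$ 0) ^ 2 + deriv (a $$ 0))"
  proof -
    have aD0: "(a * D) $$ 0 = D $$ 1" using aA(3) by (simp add: aD icc_ins)
    show ?thesis unfolding dk aD0 D1 using sm by (simp add: algebra_simps power2_eq_square)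
  qed
  show "dkp_a 2 h a $$ 1 = 2 * deriv (a $$ 2) + deriv (deriv (a $$ 1)) + 2 * deriv (a $$ 0) * (h $$ 1 - a $$ 1)"
  proof -
    have aD1: "(a * D) $$ 1 = D $$ 2 + a $$ 0 * D $$ 1" using aA(3) by (simp add: aD icc_ins)
    show ?thesis unfolding dk aD1 D1 D2 r3 unfolding r2 r1 using sm
      by (simp add: algebra_simps power2_eq_square)
  qed
qed





lemma part2_last:
  assumes S: "inS12 h a"
  shows "zz * (fdb h 2 + cst (a $$ 0) * fdb h 1 + cst (a $$ 1 - 2 * h $$ 1))
            = fdb h 3 + cst (a $$ 0) * fdb h 2 + cst (a $$ 1 - 3 * h $$ 1) * fdb h 1
              + cst (a $$ 2 - 2 * a $$ 0 * h $$ 1 - 3 * h $$ 2 - 3 * deriv (h $$ 1))"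
proof -
  have N: "inN h a" using S unfolding inS12_def inS_def by auto
  have hM: "Msh h" "smooth_ser h" using N unfolding inN_def inM_iff by auto
  have sm: "\<And>k. smooth (h $$ k)" using hM(2) by (auto intro: smooth_serD)
  have S1: "zz * a = FF (a $$ 0) (a $$ 1) h" using S unfolding S12_iff[OF N] by auto
  have S2: "zz ^ 2 * a = KP3 h + cst (a $$ 0) * KP2 h + cst (a $$ 1) * h + cst (a $$ 2)"
    using S hM(1) unfolding inS12_def S2_iff[OF hM(1)] by auto
  have L: "fdb h 2 + cst (a $$ 0) * fdb h 1 + cst (a $$ 1 - 2 * h $$ 1) = FF (a $$ 0) (a $$ 1) h"
    using hM(1) by (simp add: FF_def KP2_def P2_0 cst_diff algebra_simps)
  have K2: "KP2 h = fdb h 2 - cst (2 * h $$ 1)" using hM(1) by (simp add: KP2_def P2_0)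
  have K3: "KP3 h = fdb h 3 - cst (3 * h $$ 1) * h - cst (3 * deriv (h $$ 1) + 3 * h $$ 2)"
    using hM(1) sm by (simp add: KP3_def P3_0 P3_m1 P2_0 P2_1 add.commute)
  have "zz * (fdb h 2 + cst (a $$ 0) * fdb h 1 + cst (a $$ 1 - 2 * h $$ 1)) = zz ^ 2 * a"
    unfolding L S1[symmetric] by (simp add: zz_pow2)
  also have "\<dots> = fdb h 3 + cst (a $$ 0) * fdb h 2 + cst (a $$ 1 - 3 * h $$ 1) * fdb h 1
              + cst (a $$ 2 - 2 * a $$ 0 * h $$ 1 - 3 * h $$ 2 - 3 * deriv (h $$ 1))"
    unfolding S2 K2 K3 by (simp add: cst_diff cst_add cst_mult algebra_simps)
  finally show ?thesis .
qed

theorem mainTheorem7: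
  shows
   "(\<forall>a0 a1 h1 h2. smooth a0 \<and> smooth a1 \<and> smooth h1 \<and> smooth h2 \<longrightarrow>
       (\<exists>!(h, a). inS12 h a \<and> zc a 0 = a0 \<and> zc a (-1) = a1
                   \<and> zc h (-1) = h1 \<and> zc h (-2) = h2))
    \<and> (\<forall>h a. inS12 h a \<longrightarrow>
       (let a0 = zc a 0; a1 = zc a (-1); a2 = zc a (-2);
            h1 = zc h (-1); h2 = zc h (-2); h3 = zc h (-3) in
          a2 = 2 * h2 + deriv h1 + a0 * h1
        \<and> h3 = - deriv (deriv h1) - 2 * deriv h2 + h1 ^ 2 - a1 * h1 - a0 * (deriv h1 + h2)
        \<and> zc (dkp_a 2 h a) 0 = deriv (2 * a1 - a0 ^ 2 + deriv a0)
        \<and> zc (dkp_a 2 h a) (-1) = 2 * deriv a2 + deriv (deriv a1) + 2 * deriv a0 * (h1 - a1)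
        \<and> zc (dkp_h 2 h a) (-1) = deriv (2 * h2 + deriv h1)
        \<and> zc (dkp_h 2 h a) (-2) = - deriv (2 * deriv (deriv h1) + 3 * deriv h2 - 3 * h1 ^ 2
                                    + 2 * a0 * (deriv h1 + h2) + 2 * a1 * h1)
        \<and> zz * (fdb h 2 + cst a0 * fdb h 1 + cst (a1 - 2 * h1))
            = fdb h 3 + cst a0 * fdb h 2 + cst (a1 - 3 * h1) * fdb h 1
              + cst (a2 - 2 * a0 * h1 - 3 * h2 - 3 * deriv h1)))"
proof (intro conjI allI impI)
  fix a0 a1 h1 h2 :: coef
  assume that: "smooth a0 \<and> smooth a1 \<and> smooth h1 \<and> smooth h2"
  show "\<exists>!(h, a). inS12 h a \<and> zc a 0 = a0 \<and> zc a (-1) = a1 \<and> zc h (-1) = h1 \<and> zc h (-2) = h2"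
    by (rule part1) (use that in auto)
next
  fix h a assume S: "inS12 h a"
  have N: "inN h a" using S unfolding inS12_def inS_def by auto
  have hM: "Msh h" "smooth_ser h" using N unfolding inN_def inM_iff by auto
  have aA: "smooth_ser a" using N unfolding inN_def inA_iff by auto
  have sm: "\<And>k. smooth (h $$ k)" "\<And>k. smooth (a $$ k)" using hM(2) aA by (auto intro: smooth_serD)
  note F = part2_facts[OF S] part2_flowa[OF S] part2_last[OF S]
  have dh1: "dkp_h 2 h a $$ 1 = deriv (2 * h $$ 2 + deriv (h $$ 1))"
    unfolding dkp_h_def using F(3) by simp
  have dh2: "dkp_h 2 h a $$ 2 = - deriv (2 * deriv (deriv (h $$ 1)) + 3 * deriv (h $$ 2) - 3 * (h $$ 1) ^ 2
                                    + 2 * a $$ 0 * (deriv (h $$ 1) + h $$ 2) + 2 * a $$ 1 * h $$ 1)"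
    unfolding dkp_h_def Dx_nth F(4) using sm by (intro deriv_uminus_s) simp
  show "let a0 = zc a 0; a1 = zc a (-1); a2 = zc a (-2);
            h1 = zc h (-1); h2 = zc h (-2); h3 = zc h (-3) in
          a2 = 2 * h2 + deriv h1 + a0 * h1
        \<and> h3 = - deriv (deriv h1) - 2 * deriv h2 + h1 ^ 2 - a1 * h1 - a0 * (deriv h1 + h2)
        \<and> zc (dkp_a 2 h a) 0 = deriv (2 * a1 - a0 ^ 2 + deriv a0)
        \<and> zc (dkp_a 2 h a) (-1) = 2 * deriv a2 + deriv (deriv a1) + 2 * deriv a0 * (h1 - a1)
        \<and> zc (dkp_h 2 h a) (-1) = deriv (2 * h2 + deriv h1)
        \<and> zc (dkp_h 2 h a) (-2) = - deriv (2 * deriv (deriv h1) + 3 * deriv h2 - 3 * h1 ^ 2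
                                    + 2 * a0 * (deriv h1 + h2) + 2 * a1 * h1)
        \<and> zz * (fdb h 2 + cst a0 * fdb h 1 + cst (a1 - 2 * h1))
            = fdb h 3 + cst a0 * fdb h 2 + cst (a1 - 3 * h1) * fdb h 1
              + cst (a2 - 2 * a0 * h1 - 3 * h2 - 3 * deriv h1)"
    unfolding Let_def zc_def using F(1,2,5,6,7) dh1 dh2 by simp
qed

end
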